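(* Let $X$ be a finite set with $|X|=n$, $0\notin X$, $W=X\cup\{0\}$. Let $\mathfrak{V}$ be a $\big(\binom{n}{2}_{\,n-2}\ \binom{n}{3}_{\,3}\big)$-configuration whose point set is $\mathcal{P}_2(X)$, and let $\mathfrak{M}$ be the structure with point set $\mathcal{P}_2(W)$ whose lines are the lines of $\mathfrak{V}$ together with all sets $\{\{0,x\},\{0,y\},\{x,y\}\}$ for distinct $x,y\in X$. Let $H$ be a hyperplane of $\mathfrak{M}$, and on $X$ define the equivalence relation $x\sim y$ iff $x=y$, or $x\neq y$ and $\{x,y\}\in H$. If $\mathfrak{a}\neq\mathfrak{b}$ are equivalence classes of $\sim$, then $\{0,x\}\in H$ for all $x\in\mathfrak{a}$, or $\{0,x\}\in H$ for all $x\in\mathfrak{b}$.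
   Context: $\mathcal{P}_2(Y)$ denotes the set of $2$-element subsets of $Y$. A $(v_r\ b_k)$-configuration is a partial linear space with $v$ points and $b$ lines, each point on exactly $r$ lines and each line containing exactly $k$ points. A subspace is a set of points containing every line that meets it in at least two points; a hyperplane is a proper subspace meeting every line. *)

theory Defs
  imports Main
begin

definition P2 :: "'a set \<Rightarrow> 'a set set" where
  "P2 Y = {e. e \<subseteq> Y \<and> card e = 2}"

definition partial_linear_space :: "'p set \<Rightarrow> 'p set set \<Rightarrow> bool" where
  "partial_linear_space P L \<longleftrightarrow>
     (\<forall>l\<in>L. l \<subseteq> P \<and> 2 \<le> card l) \<and>
     (\<forall>p\<in>P. \<forall>q\<in>P. p \<noteq> q \<longrightarrow>
        (\<forall>l\<in>L. \<forall>m\<in>L. p \<in> l \<and> q \<in> l \<and> p \<in> m \<and> q \<in> m \<longrightarrow> l = m))"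

definition configuration :: "nat \<Rightarrow> nat \<Rightarrow> nat \<Rightarrow> nat \<Rightarrow> 'p set \<Rightarrow> 'p set set \<Rightarrow> bool" where
  "configuration v r b k P L \<longleftrightarrow>
     partial_linear_space P L \<and> finite P \<and> finite L \<and>
     card P = v \<and> card L = b \<and>
     (\<forall>p\<in>P. card {l\<in>L. p \<in> l} = r) \<and>
     (\<forall>l\<in>L. card l = k)"

definition subspace :: "'p set \<Rightarrow> 'p set set \<Rightarrow> 'p set \<Rightarrow> bool" where
  "subspace P L S \<longleftrightarrow> S \<subseteq> P \<and> (\<forall>l\<in>L. 2 \<le> card (l \<inter> S) \<longrightarrow> l \<subseteq> S)"

definition hyperplane :: "'p set \<Rightarrow> 'p set set \<Rightarrow> 'p set \<Rightarrow> bool" where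
  "hyperplane P L H \<longleftrightarrow> subspace P L H \<and> H \<noteq> P \<and> (\<forall>l\<in>L. l \<inter> H \<noteq> {})"

text \<open>Lines of the extended structure M on P2(X \<union> {z}), z playing the role of 0.\<close>
definition ext_lines :: "'a \<Rightarrow> 'a set \<Rightarrow> 'a set set set \<Rightarrow> 'a set set set" where
  "ext_lines z X L = L \<union> {{{z,x},{z,y},{x,y}} | x y. x \<in> X \<and> y \<in> X \<and> x \<noteq> y}"

end

theory Submission
  imports Defs
begin

lemma tri:
  assumes hp: "hyperplane (P2 (X \<union> {z})) (ext_lines z X L) H"
    and zX: "z \<notin> X" and xX: "x \<in> X" and yX: "y \<in> X" and xy: "x \<noteq> y"
  shows "({z,x}\<in>H \<and> {z,y}\<in>H \<longrightarrow> {x,y}\<in>H) \<and> ({z,x}\<in>H \<and> {x,y}\<in>H \<longrightarrow> {z,y}\<in>H)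
    \<and> ({z,y}\<in>H \<and> {x,y}\<in>H \<longrightarrow> {z,x}\<in>H) \<and> ({z,x}\<in>H \<or> {z,y}\<in>H \<or> {x,y}\<in>H)"
proof -
  let ?l = "{{z,x},{z,y},{x,y}}"
  have lL: "?l \<in> ext_lines z X L" unfolding ext_lines_def using xX yX xy by blast
  have d1: "{z,x} \<noteq> {z,y}" using xy by (auto simp: doubleton_eq_iff)
  have d2: "{z,x} \<noteq> {x,y}" using zX xX yX by (auto simp: doubleton_eq_iff)
  have d3: "{z,y} \<noteq> {x,y}" using zX xX yX by (auto simp: doubleton_eq_iff)
  have sub: "\<And>p q. p \<in> ?l \<Longrightarrow> q \<in> ?l \<Longrightarrow> p \<noteq> q \<Longrightarrow> p \<in> H \<Longrightarrow> q \<in> H \<Longrightarrow> ?l \<subseteq> H"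
  proof -
    fix p q assume "p \<in> ?l" "q \<in> ?l" "p \<noteq> q" "p \<in> H" "q \<in> H"
    then have "{p,q} \<subseteq> ?l \<inter> H" by auto
    moreover have "finite (?l \<inter> H)" by simp
    ultimately have "card {p,q} \<le> card (?l \<inter> H)" by (rule card_mono[rotated])
    with \<open>p \<noteq> q\<close> have "2 \<le> card (?l \<inter> H)" by simp
    then show "?l \<subseteq> H" using hp lL unfolding hyperplane_def subspace_def by blast
  qed
  have meet: "?l \<inter> H \<noteq> {}" using hp lL unfolding hyperplane_def by blast
  show ?thesis using sub[of "{z,x}" "{z,y}"] sub[of "{z,x}" "{x,y}"] sub[of "{z,y}" "{x,y}"]
      d1 d2 d3 meet by blast
qed

theorem lemma3p4:
  fixes X :: "'a set" and z :: 'a and L :: "'a set set set" and H :: "'a set set"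
    and n :: nat and A B :: "'a set"
  assumes "finite X" and "card X = n" and "z \<notin> X"
    and "configuration (n choose 2) (n - 2) (n choose 3) 3 (P2 X) L"
    and "hyperplane (P2 (X \<union> {z})) (ext_lines z X L) H"
    and "A \<in> {{y \<in> X. x = y \<or> (x \<noteq> y \<and> {x, y} \<in> H)} | x. x \<in> X}"
    and "B \<in> {{y \<in> X. x = y \<or> (x \<noteq> y \<and> {x, y} \<in> H)} | x. x \<in> X}"
    and "A \<noteq> B"
  shows "(\<forall>x\<in>A. {z, x} \<in> H) \<or> (\<forall>x\<in>B. {z, x} \<in> H)"
proof (rule ccontr)
  define R where "R = (\<lambda>x y. x = y \<or> (x \<noteq> y \<and> {x, y} \<in> H))"
  note T = tri[OF assms(5) assms(3)]
  have sym: "R x y \<Longrightarrow> R y x" for x y unfolding R_def by (auto simp: insert_commute)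
  have trans: "R x y \<Longrightarrow> R y w \<Longrightarrow> x \<in> X \<Longrightarrow> y \<in> X \<Longrightarrow> w \<in> X \<Longrightarrow> R x w" for x y w
  proof -
    assume r1: "R x y" and r2: "R y w" and X: "x \<in> X" "y \<in> X" "w \<in> X"
    show "R x w"
    proof (cases "x = y \<or> y = w \<or> x = w")
      case True then show ?thesis using r1 r2 unfolding R_def by auto
    next
      case False
      then have h1: "{x,y} \<in> H" and h2: "{y,w} \<in> H" using r1 r2 unfolding R_def by auto
      have a: "({z,x}\<in>H) = ({z,y}\<in>H)" using T[of x y] X False h1 by blast
      have b: "({z,y}\<in>H) = ({z,w}\<in>H)" using T[of y w] X False h2 by blast
      have "{x,w} \<in> H" using T[of x w] X False a b by blast
      then show ?thesis unfolding R_def by auto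
    qed
  qed
  assume "\<not> ?thesis"
  then obtain a b where aA: "a \<in> A" and bB: "b \<in> B" and na: "{z,a} \<notin> H" and nb: "{z,b} \<notin> H"
    by blast
  obtain x where xX: "x \<in> X" and Ax: "A = {y \<in> X. R x y}" using assms(6) unfolding R_def by blast
  obtain x' where xX': "x' \<in> X" and Bx: "B = {y \<in> X. R x' y}" using assms(7) unfolding R_def by blast
  have aX: "a \<in> X" and bX: "b \<in> X" using aA bB Ax Bx by auto
  have rab: "R a b"
  proof (cases "a = b")
    case True then show ?thesis unfolding R_def by simp
  next
    case False then show ?thesis using T[of a b] aX bX na nb unfolding R_def by blast
  qed
  have rxa: "R x a" using aA Ax by auto
  have rxb: "R x' b" using bB Bx by auto
  have rxx': "R x x'" using trans[OF trans[OF rxa rab] sym[OF rxb]] xX aX bX xX' by blast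
  have "A = B"
  proof -
    have "R x y = R x' y" if "y \<in> X" for y
      using trans[OF sym[OF rxx'], of y] trans[OF rxx', of y] that xX xX' by blast
    then show ?thesis using Ax Bx by auto
  qed
  with assms(8) show False by simp
qed

end
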